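(* Let $V$ be a countable set, $\Omega_0$ a finite set, $\Omega=\Omega_0^V$, $q\in\mathbb N$, and let $\Phi=\{\Phi_B\}_{B\Subset V}$ be an absolutely summable potential, i.e. each $\Phi_B:\Omega\to\mathbb R$ is $\mathcal F_B$-measurable and $\sum_{B\Subset V,\,B\ni x}\|\Phi_B\|_\infty<\infty$ for every $x\in V$. For $\Lambda\Subset V$, $\sigma_\Lambda\in\Omega_\Lambda=\Omega_0^\Lambda$ and $\omega_1,\dots,\omega_q\in\Omega$ set $$H_{\Lambda,\Phi}(\sigma_\Lambda;\omega_1,\dots,\omega_q)=\sum_{B\subseteq\Lambda}\Phi_B(\sigma_\Lambda)+\frac1q\sum_{\substack{B\Subset V\\ B\cap\Lambda\ne\emptyset,\ B\cap\Lambda^c\ne\emptyset}}\sum_{i=1}^q\Phi_B(\sigma_\Lambda\omega_{i,\Lambda^c}),$$ and define the Gibbs $q$-specification $\gamma^\Phi=(\gamma^\Phi_\Lambda)_{\Lambda\Subset V}$ by $$\gamma^\Phi_\Lambda(A\mid\omega_1,\dots,\omega_q)=\frac{1}{Z_\Lambda(\omega_1,\dots,\omega_q)}\sum_{\sigma_\Lambda\in\Omega_\Lambda}e^{-H_{\Lambda,\Phi}(\sigma_\Lambda;\omega_1,\dots,\omega_q)}\,\frac1q\sum_{i=1}^q\mathbf 1_A(\sigma_\Lambda\omega_{i,\Lambda^c}),\quad A\in\mathcal F,$$ with $Z_\Lambda(\omega_1,\dots,\omega_q)=\sum_{\sigma_\Lambda\in\Omega_\Lambda}e^{-H_{\Lambda,\Phi}(\sigma_\Lambda;\omega_1,\dots,\omega_q)}$.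 Then $\gamma^\Phi$ is quasilocal.
   Context: $\mathcal F$ is the product $\sigma$-algebra on $\Omega$; $\mathcal F_B$ is the $\sigma$-algebra generated by the coordinates in $B$; a function $\Phi_B$ that is $\mathcal F_B$-measurable is regarded as a function of the configuration on $B$, so $\Phi_B(\sigma_\Lambda)$ makes sense for $B\subseteq\Lambda$. $\sigma_\Lambda\omega_{\Lambda^c}$ is the configuration equal to $\sigma_\Lambda$ on $\Lambda$ and to $\omega$ on $\Lambda^c$. $\Omega$ carries the topology of coordinatewise convergence and $\Omega^q$ the product topology. A family $(\gamma_\Lambda)_{\Lambda\Subset V}$ of kernels is quasilocal if for each $\Lambda\Subset V$ and every event $A\in\mathcal F_\Lambda$ the map $(\omega_1,\dots,\omega_q)\mapsto\gamma_\Lambda(A\mid\omega_1,\dots,\omega_q)$ is continuous on $\Omega^q$. *)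

theory Defs
  imports "HOL-Analysis.Analysis"
begin

(* Configurations: <Omega> = 'v <Rightarrow> 'a with 'v countable (the vertex set V)
  and 'a finite (the single-site space <Omega><^sub>0). *)

definition F_sub :: "'v set \<Rightarrow> ('v \<Rightarrow> 'a) measure" where
  "F_sub B = vimage_algebra UNIV (\<lambda>\<omega>. restrict \<omega> B) (PiM B (\<lambda>_. count_space UNIV))"

definition glue :: "'v set \<Rightarrow> ('v \<Rightarrow> 'a) \<Rightarrow> ('v \<Rightarrow> 'a) \<Rightarrow> ('v \<Rightarrow> 'a)" where
  "glue \<Lambda> \<sigma> \<omega> = (\<lambda>x. if x \<in> \<Lambda> then \<sigma> x else \<omega> x)"

definition Omega_loc :: "'v set \<Rightarrow> ('v \<Rightarrow> 'a) set" where
  "Omega_loc \<Lambda> = PiE \<Lambda> (\<lambda>_. UNIV)"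

(* Hamiltonian H_{<Lambda>,<Phi>}(<sigma>_<Lambda>; <omega>_1..<omega>_q); boundary conditions <omega>_1..<omega>_q are <omega> 0 .. <omega> (q-1). *)
definition gibbsH :: "nat \<Rightarrow> ('v set \<Rightarrow> ('v \<Rightarrow> 'a) \<Rightarrow> real) \<Rightarrow> 'v set \<Rightarrow> ('v \<Rightarrow> 'a)
    \<Rightarrow> (nat \<Rightarrow> 'v \<Rightarrow> 'a) \<Rightarrow> real" where
  "gibbsH q \<Phi> \<Lambda> \<sigma> \<omega> =
     (\<Sum>B\<in>Pow \<Lambda>. \<Phi> B \<sigma>)
     + (1 / real q) * infsum (\<lambda>B. \<Sum>i<q. \<Phi> B (glue \<Lambda> \<sigma> (\<omega> i)))
                        {B. finite B \<and> B \<inter> \<Lambda> \<noteq> {} \<and> B - \<Lambda> \<noteq> {}}"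

definition partZ :: "nat \<Rightarrow> ('v set \<Rightarrow> ('v \<Rightarrow> 'a) \<Rightarrow> real) \<Rightarrow> 'v set
    \<Rightarrow> (nat \<Rightarrow> 'v \<Rightarrow> 'a) \<Rightarrow> real" where
  "partZ q \<Phi> \<Lambda> \<omega> = (\<Sum>\<sigma>\<in>Omega_loc \<Lambda>. exp (- gibbsH q \<Phi> \<Lambda> \<sigma> \<omega>))"

definition gibbs_spec :: "nat \<Rightarrow> ('v set \<Rightarrow> ('v \<Rightarrow> 'a) \<Rightarrow> real) \<Rightarrow> 'v set
    \<Rightarrow> ('v \<Rightarrow> 'a) set \<Rightarrow> (nat \<Rightarrow> 'v \<Rightarrow> 'a) \<Rightarrow> real" where
  "gibbs_spec q \<Phi> \<Lambda> A \<omega> =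
     (1 / partZ q \<Phi> \<Lambda> \<omega>) *
     (\<Sum>\<sigma>\<in>Omega_loc \<Lambda>. exp (- gibbsH q \<Phi> \<Lambda> \<sigma> \<omega>) *
        ((1 / real q) * (\<Sum>i<q. indicator A (glue \<Lambda> \<sigma> (\<omega> i)))))"

definition Omega_top :: "('v \<Rightarrow> 'a) topology" where
  "Omega_top = product_topology (\<lambda>_. discrete_topology UNIV) UNIV"

definition Omega_q_top :: "nat \<Rightarrow> (nat \<Rightarrow> 'v \<Rightarrow> 'a) topology" where
  "Omega_q_top q = product_topology (\<lambda>_. Omega_top) {..<q}"

definition quasilocal :: "nat \<Rightarrow> ('v set \<Rightarrow> ('v \<Rightarrow> 'a) set \<Rightarrow> (nat \<Rightarrow> 'v \<Rightarrow> 'a) \<Rightarrow> real) \<Rightarrow> bool" where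
  "quasilocal q \<gamma> \<longleftrightarrow>
     (\<forall>\<Lambda> A. finite \<Lambda> \<and> A \<in> sets (F_sub \<Lambda>) \<longrightarrow>
        continuous_map (Omega_q_top q) euclideanreal (\<gamma> \<Lambda> A))"

end

theory Submission
  imports Defs
begin

lemma vimage_dep:
  fixes A :: "('v \<Rightarrow> 'a) set" and B :: "'v set"
  assumes "A \<in> sets (F_sub B)" "\<forall>x\<in>B. w x = w' x"
  shows "w \<in> A \<longleftrightarrow> w' \<in> A"
proof -
  have "(\<lambda>\<omega>::'v\<Rightarrow>'a. restrict \<omega> B) \<in> UNIV \<rightarrow> space (PiM B (\<lambda>_. count_space (UNIV::'a set)))"
    by (auto simp: space_PiM)
  from sets_vimage_algebra2[OF this] assms(1) obtain X where
    "A = (\<lambda>\<omega>. restrict \<omega> B) -` X \<inter> UNIV" unfolding F_sub_def by auto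
  moreover have "restrict w B = restrict w' B" using assms(2) by (auto simp: restrict_def)
  ultimately show ?thesis by auto
qed

lemma Phi_dep:
  fixes f :: "('v \<Rightarrow> 'a) \<Rightarrow> real" and B :: "'v set"
  assumes "f \<in> borel_measurable (F_sub B)" "\<forall>x\<in>B. w x = w' x"
  shows "f w = f w'"
proof -
  have "f -` {f w} \<inter> space (F_sub B) \<in> sets (F_sub B)"
    using measurable_sets[OF assms(1)] by auto
  moreover have "space (F_sub B) = UNIV" by (simp add: F_sub_def)
  ultimately have "f -` {f w} \<in> sets (F_sub B)" by (metis Int_UNIV_right)
  from vimage_dep[OF this assms(2)] show ?thesis by simp
qed

lemma finite_Omega_loc: "finite B \<Longrightarrow> finite (Omega_loc B :: ('v \<Rightarrow> 'a::finite) set)"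
  unfolding Omega_loc_def by (intro finite_PiE) auto

lemma Phi_bdd:
  assumes "f \<in> borel_measurable (F_sub B)" "finite B"
  shows "\<bar>(f::('v \<Rightarrow> 'a::finite) \<Rightarrow> real) w\<bar> \<le> (SUP \<omega>. \<bar>f \<omega>\<bar>)"
proof -
  have "range (\<lambda>\<omega>. \<bar>f \<omega>\<bar>) \<subseteq> (\<lambda>\<omega>. \<bar>f \<omega>\<bar>) ` Omega_loc B"
  proof
    fix y assume "y \<in> range (\<lambda>\<omega>. \<bar>f \<omega>\<bar>)"
    then obtain \<omega> where y: "y = \<bar>f \<omega>\<bar>" by auto
    have "f \<omega> = f (restrict \<omega> B)" by (rule Phi_dep[OF assms(1)]) auto
    moreover have "restrict \<omega> B \<in> Omega_loc B" by (auto simp: Omega_loc_def)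
    ultimately show "y \<in> (\<lambda>\<omega>. \<bar>f \<omega>\<bar>) ` Omega_loc B" using y by auto
  qed
  hence "finite (range (\<lambda>\<omega>. \<bar>f \<omega>\<bar>))"
    using finite_Omega_loc[OF assms(2)] finite_subset by blast
  hence "bdd_above (range (\<lambda>\<omega>. \<bar>f \<omega>\<bar>))" by simp
  thus ?thesis by (rule cSUP_upper[OF UNIV_I])
qed

lemma coord_cont:
  assumes "i < q"
  shows "continuous_map (Omega_q_top q) (discrete_topology UNIV) (\<lambda>\<omega>::nat \<Rightarrow> 'v \<Rightarrow> 'a. \<omega> i x)"
proof -
  have 1: "continuous_map (Omega_q_top q) (Omega_top :: ('v \<Rightarrow> 'a) topology) (\<lambda>\<omega>. \<omega> i)"
    unfolding Omega_q_top_def using assms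
    by (metis continuous_map_product_projection lessThan_iff)
  have 2: "continuous_map (Omega_top :: ('v \<Rightarrow> 'a) topology) (discrete_topology UNIV) (\<lambda>w. w x)"
    unfolding Omega_top_def by (rule continuous_map_product_projection) simp
  show ?thesis using continuous_map_compose[OF 1 2] by (simp add: o_def)
qed

lemma cont_finite_dep:
  assumes "finite B" "\<And>w w'. \<forall>x\<in>B. w x = w' x \<Longrightarrow> f w = f w'" "i < q"
  shows "continuous_map (Omega_q_top q) euclideanreal (\<lambda>\<omega>::nat \<Rightarrow> 'v \<Rightarrow> 'a. f (\<omega> i))"
  unfolding continuous_map_def
proof (intro conjI allI impI)
  show "(\<lambda>\<omega>. f (\<omega> i)) \<in> topspace (Omega_q_top q) \<rightarrow> topspace euclideanreal" by simp
  fix U :: "real set" assume "openin euclideanreal U"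
  let ?X = "Omega_q_top q :: (nat \<Rightarrow> 'v \<Rightarrow> 'a) topology"
  show "openin ?X {\<omega> \<in> topspace ?X. f (\<omega> i) \<in> U}"
  proof (subst openin_subopen, intro ballI)
    fix \<omega>0 assume \<omega>0: "\<omega>0 \<in> {\<omega> \<in> topspace ?X. f (\<omega> i) \<in> U}"
    define T where "T = (\<Inter>x\<in>B. {\<omega> \<in> topspace ?X. \<omega> i x \<in> {\<omega>0 i x}}) \<inter> topspace ?X"
    have "openin ?X T" unfolding T_def
      by (intro openin_INT assms openin_continuous_map_preimage[OF coord_cont[OF assms(3)]]) auto
    moreover have "\<omega>0 \<in> T" using \<omega>0 by (auto simp: T_def)
    moreover have "T \<subseteq> {\<omega> \<in> topspace ?X. f (\<omega> i) \<in> U}"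
    proof
      fix \<omega> assume "\<omega> \<in> T"
      hence "\<forall>x\<in>B. \<omega> i x = \<omega>0 i x" "\<omega> \<in> topspace ?X" by (auto simp: T_def)
      with assms(2)[of "\<omega> i" "\<omega>0 i"] \<omega>0 show "\<omega> \<in> {\<omega> \<in> topspace ?X. f (\<omega> i) \<in> U}" by auto
    qed
    ultimately show "\<exists>T. openin ?X T \<and> \<omega>0 \<in> T \<and> T \<subseteq> {\<omega> \<in> topspace ?X. f (\<omega> i) \<in> U}" by blast
  qed
qed

lemma unif_tail:
  fixes t :: "'w \<Rightarrow> 'b \<Rightarrow> real" and M :: "'b \<Rightarrow> real"
  assumes M: "M summable_on S" and tM: "\<And>\<omega> B. B \<in> S \<Longrightarrow> \<bar>t \<omega> B\<bar> \<le> M B" and "\<epsilon> > 0"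
  shows "\<forall>\<^sub>F F in finite_subsets_at_top S. \<forall>\<omega>. dist (sum (t \<omega>) F) (infsum (t \<omega>) S) < \<epsilon>"
proof -
  obtain m where m: "(M has_sum m) S" using M unfolding summable_on_def by blast
  hence "(sum M \<longlongrightarrow> m) (finite_subsets_at_top S)" unfolding has_sum_def .
  hence ev1: "\<forall>\<^sub>F F in finite_subsets_at_top S. dist (sum M F) m < \<epsilon>"
    using assms(3) tendsto_iff by blast
  have ev2: "\<forall>\<^sub>F F in finite_subsets_at_top S. finite F \<and> F \<subseteq> S"
    by (rule eventually_finite_subsets_at_top_weakI) auto
  show ?thesis
  proof (rule eventually_mono[OF eventually_conj[OF ev1 ev2]], intro allI)
    fix F \<omega> assume F: "dist (sum M F) m < \<epsilon> \<and> finite F \<and> F \<subseteq> S"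
    have absS: "(\<lambda>B. \<bar>t \<omega> B\<bar>) summable_on S"
      by (rule summable_on_comparison_test[OF M]) (auto intro: tM)
    hence tS: "t \<omega> summable_on S" using summable_on_iff_abs_summable_on_real by auto
    have tSF: "t \<omega> summable_on (S - F)" by (rule summable_on_subset[OF tS]) auto
    have absSF: "(\<lambda>B. \<bar>t \<omega> B\<bar>) summable_on (S - F)" by (rule summable_on_subset[OF absS]) auto
    have MSF: "M summable_on (S - F)" by (rule summable_on_subset[OF M]) auto
    have SF: "S = F \<union> (S - F)" using F by auto
    have "infsum (t \<omega>) S = infsum (t \<omega>) F + infsum (t \<omega>) (S - F)"
      by (subst SF, rule infsum_Un_disjoint) (use F tSF in auto)
    hence e1: "infsum (t \<omega>) S = sum (t \<omega>) F + infsum (t \<omega>) (S - F)" using F by simp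
    have "infsum M S = infsum M F + infsum M (S - F)"
      by (subst SF, rule infsum_Un_disjoint) (use F MSF in auto)
    hence e2: "m = sum M F + infsum M (S - F)" using F m infsumI by fastforce
    have "\<bar>infsum (t \<omega>) (S - F)\<bar> \<le> infsum (\<lambda>B. \<bar>t \<omega> B\<bar>) (S - F)"
      using norm_infsum_bound[of "t \<omega>" "S - F"] absSF by simp
    also have "\<dots> \<le> infsum M (S - F)"
      by (rule infsum_mono[OF absSF MSF]) (auto intro: tM)
    finally have "\<bar>infsum (t \<omega>) (S - F)\<bar> \<le> infsum M (S - F)" .
    thus "dist (sum (t \<omega>) F) (infsum (t \<omega>) S) < \<epsilon>"
      using e1 e2 F by (auto simp: dist_real_def)
  qed
qed

lemma cont_infsum:
  fixes t :: "'w \<Rightarrow> 'b \<Rightarrow> real" and M :: "'b \<Rightarrow> real"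
  assumes M: "M summable_on S" and tM: "\<And>\<omega> B. B \<in> S \<Longrightarrow> \<bar>t \<omega> B\<bar> \<le> M B"
    and ct: "\<And>B. B \<in> S \<Longrightarrow> continuous_map X euclideanreal (\<lambda>\<omega>. t \<omega> B)"
  shows "continuous_map X euclideanreal (\<lambda>\<omega>. infsum (t \<omega>) S)"
proof -
  have "continuous_map X Met_TC.mtopology (\<lambda>\<omega>. infsum (t \<omega>) S)"
  proof (rule Met_TC.continuous_map_uniform_limit[where F="finite_subsets_at_top S" and f="\<lambda>F \<omega>. sum (t \<omega>) F"])
    have "\<forall>\<^sub>F F in finite_subsets_at_top S. finite F \<and> F \<subseteq> S"
      by (rule eventually_finite_subsets_at_top_weakI) auto
    thus "\<forall>\<^sub>F F in finite_subsets_at_top S. continuous_map X Met_TC.mtopology (\<lambda>\<omega>. sum (t \<omega>) F)"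
      by (rule eventually_mono) (auto intro!: continuous_map_sum ct)
  next
    fix \<epsilon> :: real assume "\<epsilon> > 0"
    from unif_tail[OF M tM this] show "\<forall>\<^sub>F F in finite_subsets_at_top S. \<forall>x\<in>topspace X. infsum (t x) S \<in> UNIV \<and> dist (sum (t x) F) (infsum (t x) S) < \<epsilon>"
      by (rule eventually_mono) auto
  qed (simp add: finite_subsets_at_top_neq_bot)
  thus ?thesis by simp
qed


lemma exp_cont: "continuous_map euclideanreal euclideanreal exp"
  by (simp add: continuous_on_exp continuous_on_id)

theorem mainTheorem7:
  fixes \<Phi> :: "'v::countable set \<Rightarrow> ('v \<Rightarrow> 'a::finite) \<Rightarrow> real" and q :: nat
  assumes "q \<ge> 1"
    and "\<forall>B. finite B \<longrightarrow> \<Phi> B \<in> borel_measurable (F_sub B)"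
    and "\<forall>x. (\<lambda>B. SUP \<omega>. \<bar>\<Phi> B \<omega>\<bar>) summable_on {B. finite B \<and> x \<in> B}"
  shows "quasilocal q (gibbs_spec q \<Phi>)"
  unfolding quasilocal_def
proof (intro allI impI, elim conjE)
  fix \<Lambda> :: "'v set" and A :: "('v \<Rightarrow> 'a) set" assume fin: "finite \<Lambda>" and A: "A \<in> sets (F_sub \<Lambda>)"
  let ?X = "Omega_q_top q :: (nat \<Rightarrow> 'v \<Rightarrow> 'a) topology"
  define S where "S = {B. finite B \<and> B \<inter> \<Lambda> \<noteq> {} \<and> B - \<Lambda> \<noteq> {}}"
  define M where "M B = (SUP \<omega>. \<bar>\<Phi> B \<omega>\<bar>)" for B
  have "M summable_on (\<Union>x\<in>\<Lambda>. {B. finite B \<and> x \<in> B})"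
    using fin
  proof (induction rule: finite_induct)
    case empty then show ?case by simp
  next
    case (insert x F)
    then show ?case using assms(3) unfolding M_def by (simp add: summable_on_union)
  qed
  hence MS: "M summable_on S" by (rule summable_on_subset) (auto simp: S_def)
  have cH: "continuous_map ?X euclideanreal (\<lambda>\<omega>. gibbsH q \<Phi> \<Lambda> \<sigma> \<omega>)" for \<sigma>
  proof -
    have "continuous_map ?X euclideanreal
       (\<lambda>\<omega>. infsum (\<lambda>B. \<Sum>i<q. \<Phi> B (glue \<Lambda> \<sigma> (\<omega> i))) S)"
    proof (rule cont_infsum[where M="\<lambda>B. real q * M B"])
      show "(\<lambda>B. real q * M B) summable_on S" using MS by (rule summable_on_cmult_right)
    next
      fix \<omega> :: "nat \<Rightarrow> 'v \<Rightarrow> 'a" and B assume "B \<in> S"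
      hence "finite B" by (simp add: S_def)
      have "\<bar>\<Sum>i<q. \<Phi> B (glue \<Lambda> \<sigma> (\<omega> i))\<bar> \<le> (\<Sum>i<q. \<bar>\<Phi> B (glue \<Lambda> \<sigma> (\<omega> i))\<bar>)"
        by (rule sum_abs)
      also have "\<dots> \<le> (\<Sum>i<q. M B)"
        by (rule sum_mono) (use Phi_bdd assms(2) \<open>finite B\<close> in \<open>auto simp: M_def\<close>)
      finally show "\<bar>\<Sum>i<q. \<Phi> B (glue \<Lambda> \<sigma> (\<omega> i))\<bar> \<le> real q * M B" by simp
    next
      fix B assume "B \<in> S"
      hence "finite B" by (simp add: S_def)
      show "continuous_map ?X euclideanreal (\<lambda>\<omega>. \<Sum>i<q. \<Phi> B (glue \<Lambda> \<sigma> (\<omega> i)))"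
      proof (rule continuous_map_sum[OF finite_lessThan])
        fix i assume "i \<in> {..<q}"
        show "continuous_map ?X euclideanreal (\<lambda>\<omega>. \<Phi> B (glue \<Lambda> \<sigma> (\<omega> i)))"
        proof (rule cont_finite_dep[OF \<open>finite B\<close>, where f="\<lambda>w. \<Phi> B (glue \<Lambda> \<sigma> w)"])
          fix w w' :: "'v \<Rightarrow> 'a" assume "\<forall>x\<in>B. w x = w' x"
          thus "\<Phi> B (glue \<Lambda> \<sigma> w) = \<Phi> B (glue \<Lambda> \<sigma> w')"
            using assms(2) \<open>finite B\<close> by (intro Phi_dep[where f="\<Phi> B"]) (auto simp: glue_def)
        qed (use \<open>i \<in> {..<q}\<close> in auto)
      qed
    qed
    then show ?thesis unfolding gibbsH_def S_def
      by (intro continuous_intros) auto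
  qed
  have cE: "continuous_map ?X euclideanreal (\<lambda>\<omega>. exp (- gibbsH q \<Phi> \<Lambda> \<sigma> \<omega>))" for \<sigma>
    using continuous_map_compose[OF continuous_map_minus[OF cH] exp_cont] by (simp add: o_def)
  have cI: "continuous_map ?X euclideanreal (\<lambda>\<omega>. indicator A (glue \<Lambda> \<sigma> (\<omega> i)) :: real)"
    if "i < q" for \<sigma> i
  proof (rule cont_finite_dep[OF fin _ that])
    fix w w' :: "'v \<Rightarrow> 'a"
    have "glue \<Lambda> \<sigma> w \<in> A \<longleftrightarrow> glue \<Lambda> \<sigma> w' \<in> A"
      by (rule vimage_dep[OF A]) (simp add: glue_def)
    thus "indicator A (glue \<Lambda> \<sigma> w) = (indicator A (glue \<Lambda> \<sigma> w') :: real)"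
      by (simp add: indicator_def)
  qed
  have ne: "Omega_loc \<Lambda> \<noteq> ({} :: ('v \<Rightarrow> 'a) set)" by (simp add: Omega_loc_def PiE_eq_empty_iff)
  have Zpos: "partZ q \<Phi> \<Lambda> \<omega> > 0" for \<omega>
    unfolding partZ_def by (rule sum_pos[OF finite_Omega_loc[OF fin] ne]) simp
  have cZ: "continuous_map ?X euclideanreal (\<lambda>\<omega>. partZ q \<Phi> \<Lambda> \<omega>)"
    unfolding partZ_def by (intro continuous_map_sum finite_Omega_loc fin cE)
  have c1Z: "continuous_map ?X euclideanreal (\<lambda>\<omega>. 1 / partZ q \<Phi> \<Lambda> \<omega>)"
    by (rule continuous_map_real_divide[OF continuous_map_const[THEN iffD2] cZ]) (use Zpos in \<open>auto simp: less_le\<close>)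
  show "continuous_map ?X euclideanreal (gibbs_spec q \<Phi> \<Lambda> A)"
    unfolding gibbs_spec_def
    by (intro continuous_map_real_mult c1Z continuous_map_sum finite_Omega_loc fin cE cI
          continuous_map_const[THEN iffD2]) auto
qed

end
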